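(* Let $(M,d)$ be a metric space and $Y\subseteq M$. Let $\mathcal{N}$ be a $\sigma$-algebra of subsets of $Y$ containing all Borel subsets of $Y$, and let $\nu$ be a measure on $\mathcal{N}$ with $\nu(Y)<+\infty$. Let $\upsilon_Y\in]0,+\infty[$ and assume that $Y$ is upper $\upsilon_Y$-Ahlfors regular with respect to $Y$. Let $t_1,t_2\in]0,\upsilon_Y]$ and let $K_l\in\mathcal{K}_{\upsilon_Y-t_l,Y\times Y}$ for $l\in\{1,2\}$. If $t_1+t_2<\upsilon_Y$, then for every $(x,y)\in Y^2$ with $x\neq y$ the function $t\mapsto K_1(x,t)K_2(t,y)$ is $\nu$-integrable on $Y$, the composite kernel $K_3(x,y)\equiv\int_Y K_1(x,t)K_2(t,y)\,d\nu(t)$ is continuous on $\{(x,y)\in Y^2:x\neq y\}$, and \[ \sup_{x,y\in Y,\ x\neq y}|K_3(x,y)|\,d(x,y)^{\upsilon_Y-(t_1+t_2)}<+\infty. \]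
   Context: For $\xi\in M$, $r>0$, $B(\xi,r)=\{\eta\in M: d(\xi,\eta)<r\}$. $Y$ is upper $\upsilon$-Ahlfors regular with respect to $Y$ if there exist $r_0\in]0,+\infty]$, $c_0\in]0,+\infty[$ with $\nu(B(x,r)\cap Y)\leq c_0r^{\upsilon}$ for all $x\in Y$, $r\in]0,r_0[$. For $s\in\mathbb{R}$, $\mathcal{K}_{s,Y\times Y}$ is the set of continuous functions $K:\{(x,y)\in Y\times Y: x\neq y\}\to\mathbb{C}$ with $\sup_{x\neq y}|K(x,y)|\,d(x,y)^s<+\infty$. *)

theory Defs
  imports "HOL-Analysis.Analysis"
begin

text \<open>Upper \<upsilon>-Ahlfors regularity of Y with respect to Y, for the measure N
  (ball x r = open ball B(x,r)). The radius bound r0 ranges over ]0,+\<infinity>],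
  rendered as an extended real.\<close>
definition upper_ahlfors_regular :: "'a::metric_space measure \<Rightarrow> 'a set \<Rightarrow> real \<Rightarrow> bool" where
  "upper_ahlfors_regular N Y v \<longleftrightarrow>
     (\<exists>r0::ereal. \<exists>c0::real. r0 > 0 \<and> c0 > 0 \<and>
        (\<forall>x\<in>Y. \<forall>r::real. 0 < r \<and> ereal r < r0 \<longrightarrow>
           emeasure N (ball x r \<inter> Y) \<le> ennreal (c0 * r powr v)))"

definition offdiag :: "'a set \<Rightarrow> ('a \<times> 'a) set" where
  "offdiag Y = {(x, y). x \<in> Y \<and> y \<in> Y \<and> x \<noteq> y}"

definition kernel_class :: "real \<Rightarrow> 'a::metric_space set \<Rightarrow> ('a \<Rightarrow> 'a \<Rightarrow> complex) \<Rightarrow> bool" where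
  "kernel_class s Y K \<longleftrightarrow>
     continuous_on (offdiag Y) (\<lambda>(x, y). K x y) \<and>
     (\<exists>C::real. \<forall>(x, y)\<in>offdiag Y. norm (K x y) * dist x y powr s \<le> C)"

end

theory Submission
  imports Defs
begin


lemma dyadic_ex: assumes "1 \<le> (x::real)" shows "\<exists>n::nat. 2^n \<le> x \<and> x < 2^(Suc n)"
proof -
  define k where "k = \<lfloor>log 2 x\<rfloor>"
  have k: "2 powr k \<le> x \<and> x < 2 powr (k + 1)"
    using floor_log_eq_powr_iff[of x 2 k] assms k_def by auto
  have "0 \<le> log 2 x" using assms by simp
  hence k0: "0 \<le> k" unfolding k_def by simp
  define n where "n = nat k"
  have "real_of_int k = real n" using k0 n_def by simp
  hence "2 powr k = 2 ^ n" "2 powr (k+1) = 2 ^ Suc n"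
    by (simp_all add: powr_realpow powr_add)
  thus ?thesis using k by metis
qed

lemma ennreal_term_le_suminf: "(f::nat \<Rightarrow> ennreal) k \<le> suminf f"
proof -
  have "sum f {k} \<le> suminf f" by (rule sum_le_suminf) simp_all
  thus ?thesis by simp
qed

lemma powr_pow_swap: "0 \<le> (a::real) \<Longrightarrow> (a ^ n) powr p = (a powr p) ^ n"
  by (induction n) (auto simp: powr_mult)

locale ahl =
  fixes N :: "'a::metric_space measure" and Y :: "'a set" and v c :: real
  assumes space_N: "space N = Y"
    and borel_sets: "sets (restrict_space borel Y) \<subseteq> sets N"
    and finite_N: "emeasure N Y < \<infinity>"
    and v_pos: "0 < v" and c_pos: "0 < c"
    and ball_bd: "\<And>x r. x \<in> Y \<Longrightarrow> 0 < r \<Longrightarrow> emeasure N (ball x r \<inter> Y) \<le> ennreal (c * r powr v)"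
begin

lemma meas_N: "f \<in> borel_measurable (restrict_space borel Y) \<Longrightarrow> f \<in> borel_measurable N"
  using measurable_mono[of borel borel "restrict_space borel Y" N] borel_sets space_N
  by (auto simp: space_restrict_space)

lemma sets_N: "A \<in> sets borel \<Longrightarrow> A \<inter> Y \<in> sets N"
  using borel_sets by (auto simp: sets_restrict_space)

lemma meas_borel: "f \<in> borel_measurable borel \<Longrightarrow> f \<in> borel_measurable N"
  by (intro meas_N measurable_restrict_space1)

lemma dist_meas[measurable]: "(\<lambda>t. dist z t) \<in> borel_measurable N"
  by (intro meas_borel borel_measurable_continuous_onI continuous_intros)

lemma finN: "finite_measure N"
  using finite_N space_N by (intro finite_measureI) auto

lemma single_null: assumes "z \<in> Y" shows "emeasure N {z} = 0"
proof -
  have Z: "{z} \<in> sets N" using sets_N[of "{z}"] assms by auto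
  have "emeasure N {z} \<le> ennreal (c * r powr v)" if "0 < r" for r
  proof -
    have "{z} \<subseteq> ball z r \<inter> Y" using that assms by auto
    moreover have "ball z r \<inter> Y \<in> sets N" by (intro sets_N) auto
    ultimately have "emeasure N {z} \<le> emeasure N (ball z r \<inter> Y)"
      by (intro emeasure_mono) auto
    also have "\<dots> \<le> ennreal (c * r powr v)" using ball_bd assms that by auto
    finally show ?thesis .
  qed
  hence le: "measure N {z} \<le> c * r powr v" if "0 < r" for r
    using that c_pos by (simp add: measure_def enn2real_leI)
  have "((\<lambda>r. c * r powr v) \<longlongrightarrow> c * 0) (at_right 0)"
  proof -
    have ev: "eventually (\<lambda>r. (0::real) \<le> r) (at_right 0)"
      by (rule eventually_mono[OF eventually_at_right_less]) simp
    show ?thesis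
      using v_pos ev by (intro tendsto_intros tendsto_zero_powrI) (auto intro: tendsto_ident_at)
  qed
  hence "measure N {z} \<le> c * 0"
    by (rule tendsto_lowerbound) (auto intro: le eventually_mono[OF eventually_at_right_less])
  hence "measure N {z} = 0" by (simp add: measure_nonneg antisym)
  thus ?thesis using finN Z by (simp add: finite_measure.emeasure_eq_measure)
qed

lemma AE_ne: "z \<in> Y \<Longrightarrow> AE t in N. t \<noteq> z"
  using single_null[of z] sets_N[of "{z}"] by (intro AE_I[of _ _ "{z}"]) auto

lemma shell:
  assumes z: "z \<in> Y" and a: "0 < a" and s: "0 \<le> s"
  shows "(\<integral>\<^sup>+t. ennreal (if a \<le> dist z t \<and> dist z t \<le> 2*a then dist z t powr (-s) else 0) \<partial>N)
     \<le> ennreal (c * 4 powr v * a powr (v - s))"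
proof -
  have "(\<integral>\<^sup>+t. ennreal (if a \<le> dist z t \<and> dist z t \<le> 2*a then dist z t powr (-s) else 0) \<partial>N)
     \<le> (\<integral>\<^sup>+t. ennreal (a powr (-s)) * indicator (ball z (4*a) \<inter> Y) t \<partial>N)"
  proof (intro nn_integral_mono)
    fix t assume t: "t \<in> space N"
    show "ennreal (if a \<le> dist z t \<and> dist z t \<le> 2*a then dist z t powr (-s) else 0)
        \<le> ennreal (a powr (-s)) * indicator (ball z (4*a) \<inter> Y) t"
    proof (cases "a \<le> dist z t \<and> dist z t \<le> 2*a")
      case True
      hence "t \<in> ball z (4*a) \<inter> Y" using t a space_N by auto
      moreover have "dist z t powr (-s) \<le> a powr (-s)"
        using True a s by (intro powr_mono2') auto
      ultimately show ?thesis using True by (auto intro: ennreal_leI)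
    qed auto
  qed
  also have "\<dots> = ennreal (a powr (-s)) * emeasure N (ball z (4*a) \<inter> Y)"
    by (intro nn_integral_cmult_indicator sets_N) auto
  also have "\<dots> \<le> ennreal (a powr (-s)) * ennreal (c * (4*a) powr v)"
    using ball_bd[of z "4*a"] z a by (intro mult_left_mono) auto
  also have "\<dots> = ennreal (c * 4 powr v * a powr (v - s))"
  proof -
    have "a powr (-s) * (c * (4*a) powr v) = c * 4 powr v * a powr (v - s)"
      using a by (simp add: powr_mult powr_diff powr_minus field_simps)
    thus ?thesis using a c_pos by (simp add: ennreal_mult[symmetric])
  qed
  finally show ?thesis .
qed

lemma cover_bound:
  assumes z: "z \<in> Y" and s: "0 \<le> s" and a: "\<And>k. 0 < a k"
    and cover: "\<And>t. t \<in> Y \<Longrightarrow> P t \<Longrightarrow> t \<noteq> z \<Longrightarrow> \<exists>k. a k \<le> dist z t \<and> dist z t \<le> 2 * a k"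
  shows "(\<integral>\<^sup>+t. ennreal (if P t then dist z t powr (-s) else 0) \<partial>N)
     \<le> (\<Sum>k. ennreal (c * 4 powr v * a k powr (v - s)))"
proof -
  let ?h = "\<lambda>k t. ennreal (if a k \<le> dist z t \<and> dist z t \<le> 2 * a k then dist z t powr (-s) else 0)"
  have "(\<integral>\<^sup>+t. ennreal (if P t then dist z t powr (-s) else 0) \<partial>N) \<le> (\<integral>\<^sup>+t. (\<Sum>k. ?h k t) \<partial>N)"
  proof (intro nn_integral_mono)
    fix t assume t: "t \<in> space N"
    show "ennreal (if P t then dist z t powr (-s) else 0) \<le> (\<Sum>k. ?h k t)"
    proof (cases "P t \<and> t \<noteq> z")
      case True
      then obtain k where k: "a k \<le> dist z t \<and> dist z t \<le> 2 * a k" using cover t space_N by blast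
      have "ennreal (if P t then dist z t powr (-s) else 0) = ?h k t" using True k by simp
      also have "\<dots> \<le> (\<Sum>k. ?h k t)"
        by (rule ennreal_term_le_suminf)
      finally show ?thesis .
    qed auto
  qed
  also have "\<dots> = (\<Sum>k. \<integral>\<^sup>+t. ?h k t \<partial>N)"
    by (intro nn_integral_suminf) measurable
  also have "\<dots> \<le> (\<Sum>k. ennreal (c * 4 powr v * a k powr (v - s)))"
    by (intro suminf_le summableI shell z a s)
  finally show ?thesis .
qed

lemma inner:
  assumes s: "0 \<le> s" "s < v"
  shows "\<exists>A\<ge>0. \<forall>z\<in>Y. \<forall>\<rho>>0. (\<integral>\<^sup>+t. ennreal (if dist z t < \<rho> then dist z t powr (-s) else 0) \<partial>N)
     \<le> ennreal (A * \<rho> powr (v - s))"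
proof -
  define p where "p = v - s"
  have p: "0 < p" using s p_def by simp
  define q where "q = (1/2::real) powr p"
  have q: "0 < q" "q < 1" using p powr_less_mono[of 0 p 2] unfolding q_def by (auto simp: powr_divide)
  define A where "A = c * 4 powr v * (q / (1 - q))"
  have A: "0 \<le> A" using q c_pos unfolding A_def by auto
  have "(\<integral>\<^sup>+t. ennreal (if dist z t < \<rho> then dist z t powr (-s) else 0) \<partial>N)
     \<le> ennreal (A * \<rho> powr (v - s))" if z: "z \<in> Y" and r: "0 < \<rho>" for z \<rho>
  proof -
    let ?a = "\<lambda>k::nat. \<rho> * (1/2) ^ Suc k"
    have "(\<integral>\<^sup>+t. ennreal (if dist z t < \<rho> then dist z t powr (-s) else 0) \<partial>N)
      \<le> (\<Sum>k. ennreal (c * 4 powr v * ?a k powr (v - s)))"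
    proof (rule cover_bound[OF z s(1)])
      show "0 < ?a k" for k using r by simp
      fix t assume "t \<in> Y" "dist z t < \<rho>" "t \<noteq> z"
      hence d: "0 < dist z t" "dist z t < \<rho>" by auto
      then obtain n where n: "2^n \<le> \<rho> / dist z t" "\<rho> / dist z t < 2 ^ Suc n"
        using dyadic_ex[of "\<rho> / dist z t"] by auto
      have "?a n \<le> dist z t" using n(2) d
        by (simp add: field_simps power_one_over)
      moreover have "dist z t \<le> 2 * ?a n" using n(1) d
        by (simp add: field_simps power_one_over)
      ultimately show "\<exists>k. ?a k \<le> dist z t \<and> dist z t \<le> 2 * ?a k" by blast
    qed
    also have "\<dots> = (\<Sum>k. ennreal (c * 4 powr v * \<rho> powr p * q * q ^ k))"
    proof -
      have "?a k powr (v - s) = \<rho> powr p * q * q ^ k" for k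
      proof -
        have e1: "?a k powr p = \<rho> powr p * ((1/2)^Suc k) powr p" using r by (intro powr_mult; simp)
        have e2: "((1/2::real)^Suc k) powr p = q ^ Suc k" unfolding q_def by (rule powr_pow_swap) simp
        show ?thesis using e1 e2 by (simp add: p_def)
      qed
      thus ?thesis by (simp add: mult.assoc)
    qed
    also have "\<dots> = ennreal (\<Sum>k. c * 4 powr v * \<rho> powr p * q * q ^ k)"
      using q c_pos by (intro suminf_ennreal2 summable_mult summable_geometric) auto
    also have "(\<Sum>k. c * 4 powr v * \<rho> powr p * q * q ^ k) = A * \<rho> powr (v - s)"
    proof -
      have g: "(\<Sum>k. q^k) = 1/(1-q)" using q by (intro suminf_geometric) simp
      have m: "(\<Sum>k. c * 4 powr v * \<rho> powr p * q * q ^ k) = c * 4 powr v * \<rho> powr p * q * (\<Sum>k. q^k)"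
        using q by (intro suminf_mult summable_geometric) simp
      have "(\<Sum>k. c * 4 powr v * \<rho> powr p * q * q ^ k) = c * 4 powr v * \<rho> powr p * q * (1/(1-q))"
        using m g by simp
      also have "\<dots> = A * \<rho> powr p" unfolding A_def by simp
      finally show ?thesis unfolding p_def .
    qed
    finally show ?thesis .
  qed
  thus ?thesis using A by blast
qed

lemma outer:
  assumes S: "v < S"
  shows "\<exists>B\<ge>0. \<forall>z\<in>Y. \<forall>r>0. (\<integral>\<^sup>+t. ennreal (if r \<le> dist z t then dist z t powr (-S) else 0) \<partial>N)
     \<le> ennreal (B * r powr (v - S))"
proof -
  define q where "q = (2::real) powr (v - S)"
  have q: "0 < q" "q < 1" using S unfolding q_def by (auto intro: powr_less_one)
  define B where "B = c * 4 powr v * (1 / (1 - q))"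
  have B: "0 \<le> B" using q c_pos unfolding B_def by auto
  have "(\<integral>\<^sup>+t. ennreal (if r \<le> dist z t then dist z t powr (-S) else 0) \<partial>N)
     \<le> ennreal (B * r powr (v - S))" if z: "z \<in> Y" and r: "0 < r" for z r
  proof -
    let ?a = "\<lambda>k::nat. r * 2 ^ k"
    have "(\<integral>\<^sup>+t. ennreal (if r \<le> dist z t then dist z t powr (-S) else 0) \<partial>N)
      \<le> (\<Sum>k. ennreal (c * 4 powr v * ?a k powr (v - S)))"
    proof (rule cover_bound[OF z])
      show "0 \<le> S" using S v_pos by simp
      show "0 < ?a k" for k using r by simp
      fix t assume "t \<in> Y" "r \<le> dist z t" "t \<noteq> z"
      hence d: "r \<le> dist z t" by auto
      then obtain n where n: "2^n \<le> dist z t / r" "dist z t / r < 2 ^ Suc n"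
        using dyadic_ex[of "dist z t / r"] r by auto
      have "?a n \<le> dist z t" using n(1) r
        by (simp add: field_simps)
      moreover have "dist z t \<le> 2 * ?a n" using n(2) r
        by (simp add: field_simps)
      ultimately show "\<exists>k. ?a k \<le> dist z t \<and> dist z t \<le> 2 * ?a k" by blast
    qed
    also have "\<dots> = (\<Sum>k. ennreal (c * 4 powr v * r powr (v - S) * q ^ k))"
    proof -
      have "?a k powr (v - S) = r powr (v - S) * q ^ k" for k
        using r by (simp add: powr_mult powr_pow_swap q_def)
      thus ?thesis by (simp add: mult.assoc)
    qed
    also have "\<dots> = ennreal (\<Sum>k. c * 4 powr v * r powr (v - S) * q ^ k)"
      using q c_pos by (intro suminf_ennreal2 summable_mult summable_geometric) auto
    also have "(\<Sum>k. c * 4 powr v * r powr (v - S) * q ^ k) = B * r powr (v - S)"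
    proof -
      have g: "(\<Sum>k. q^k) = 1/(1-q)" using q by (intro suminf_geometric) simp
      have m: "(\<Sum>k. c * 4 powr v * r powr (v - S) * q ^ k) = c * 4 powr v * r powr (v - S) * (\<Sum>k. q^k)"
        using q by (intro suminf_mult summable_geometric) simp
      have "(\<Sum>k. c * 4 powr v * r powr (v - S) * q ^ k) = c * 4 powr v * r powr (v - S) * (1/(1-q))"
        using m g by simp
      also have "\<dots> = B * r powr (v - S)" unfolding B_def by simp
      finally show ?thesis .
    qed
    finally show ?thesis .
  qed
  thus ?thesis using B by blast
qed

end


context ahl begin

lemma meas_punct:
  assumes "continuous_on (Y - {x}) (f :: 'a \<Rightarrow> 'b::topological_space)"
  shows "f \<in> borel_measurable N"
proof (rule meas_N, rule measurableI)
  show "\<And>t. t \<in> space (restrict_space borel Y) \<Longrightarrow> f t \<in> space borel" by simp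
  fix A :: "'b set" assume A: "A \<in> sets borel"
  have m: "f \<in> borel_measurable (restrict_space borel (Y - {x}))"
    by (rule borel_measurable_continuous_on_restrict[OF assms])
  have "f -` A \<inter> space (restrict_space borel (Y - {x})) \<in> sets (restrict_space borel (Y - {x}))"
    using measurable_sets[OF m A] .
  then obtain B where B: "B \<in> sets borel" "f -` A \<inter> (Y - {x}) = (Y - {x}) \<inter> B"
    by (auto simp: sets_restrict_space space_restrict_space)
  define C where "C = (B - {x}) \<union> (if f x \<in> A then {x} else {})"
  have C: "C \<in> sets borel" using B(1) unfolding C_def by auto
  have "f -` A \<inter> space (restrict_space borel Y) = Y \<inter> C"
  proof (rule set_eqI)
    fix t show "t \<in> f -` A \<inter> space (restrict_space borel Y) \<longleftrightarrow> t \<in> Y \<inter> C"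
      using B(2) unfolding C_def by (cases "t = x") (auto simp: space_restrict_space)
  qed
  then show "f -` A \<inter> space (restrict_space borel Y) \<in> sets (restrict_space borel Y)"
    using C by (auto simp: sets_restrict_space)
qed

end

locale ker = ahl N Y v c for N :: "'a::metric_space measure" and Y v c +
  fixes K1 K2 :: "'a \<Rightarrow> 'a \<Rightarrow> complex" and s1 s2 C1 C2 A1 A2 B :: real
  assumes s1: "0 \<le> s1" "s1 < v" and s2: "0 \<le> s2" "s2 < v" and S: "v < s1 + s2"
    and C1: "0 \<le> C1" and C2: "0 \<le> C2"
    and K1bd: "\<And>x t. x \<in> Y \<Longrightarrow> t \<in> Y \<Longrightarrow> x \<noteq> t \<Longrightarrow> norm (K1 x t) \<le> C1 * dist x t powr (-s1)"
    and K2bd: "\<And>t y. t \<in> Y \<Longrightarrow> y \<in> Y \<Longrightarrow> t \<noteq> y \<Longrightarrow> norm (K2 t y) \<le> C2 * dist y t powr (-s2)"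
    and K1c: "continuous_on (offdiag Y) (\<lambda>(x, y). K1 x y)"
    and K2c: "continuous_on (offdiag Y) (\<lambda>(x, y). K2 x y)"
    and A1: "\<And>z \<rho>. z \<in> Y \<Longrightarrow> 0 < \<rho> \<Longrightarrow> (\<integral>\<^sup>+t. ennreal (if dist z t < \<rho> then dist z t powr (-s1) else 0) \<partial>N)
     \<le> ennreal (A1 * \<rho> powr (v - s1))"
    and A2: "\<And>z \<rho>. z \<in> Y \<Longrightarrow> 0 < \<rho> \<Longrightarrow> (\<integral>\<^sup>+t. ennreal (if dist z t < \<rho> then dist z t powr (-s2) else 0) \<partial>N)
     \<le> ennreal (A2 * \<rho> powr (v - s2))"
    and Bd: "\<And>z r. z \<in> Y \<Longrightarrow> 0 < r \<Longrightarrow> (\<integral>\<^sup>+t. ennreal (if r \<le> dist z t then dist z t powr (-(s1+s2)) else 0) \<partial>N)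
     \<le> ennreal (B * r powr (v - (s1+s2)))"
    and A1pos: "0 \<le> A1" and A2pos: "0 \<le> A2" and Bpos: "0 \<le> B"
begin

lemma K1_meas[measurable]: assumes "x \<in> Y" shows "K1 x \<in> borel_measurable N"
proof (rule meas_punct)
  have "continuous_on (Y - {x}) (\<lambda>t. (\<lambda>(x, y). K1 x y) (x, t))"
    by (rule continuous_on_compose2[OF K1c]) (auto intro!: continuous_intros simp: offdiag_def assms)
  thus "continuous_on (Y - {x}) (K1 x)" by simp
qed

lemma K2_meas[measurable]: assumes "y \<in> Y" shows "(\<lambda>t. K2 t y) \<in> borel_measurable N"
proof (rule meas_punct)
  have "continuous_on (Y - {y}) (\<lambda>t. (\<lambda>(x, y). K2 x y) (t, y))"
    by (rule continuous_on_compose2[OF K2c]) (auto intro!: continuous_intros simp: offdiag_def assms)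
  thus "continuous_on (Y - {y}) (\<lambda>t. K2 t y)" by simp
qed

definition F :: "'a \<Rightarrow> 'a \<Rightarrow> 'a \<Rightarrow> complex" where "F x y t = K1 x t * K2 t y"

lemma F_meas[measurable]: "x \<in> Y \<Longrightarrow> y \<in> Y \<Longrightarrow> F x y \<in> borel_measurable N"
  unfolding F_def by measurable

lemma F_bd: "x \<in> Y \<Longrightarrow> y \<in> Y \<Longrightarrow> t \<in> Y \<Longrightarrow> t \<noteq> x \<Longrightarrow> t \<noteq> y \<Longrightarrow>
   norm (F x y t) \<le> C1 * C2 * (dist x t powr (-s1) * dist y t powr (-s2))"
proof -
  assume a: "x \<in> Y" "y \<in> Y" "t \<in> Y" "t \<noteq> x" "t \<noteq> y"
  have "norm (F x y t) = norm (K1 x t) * norm (K2 t y)" by (simp add: F_def norm_mult)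
  also have "\<dots> \<le> (C1 * dist x t powr (-s1)) * (C2 * dist y t powr (-s2))"
    using a C1 C2 by (intro mult_mono K1bd K2bd) auto
  finally show ?thesis by (simp add: algebra_simps)
qed

lemma rpow_le: "0 < (a::real) \<Longrightarrow> a \<le> b \<Longrightarrow> 0 \<le> s \<Longrightarrow> b powr (-s) \<le> a powr (-s)"
  by (intro powr_mono2') auto

lemma region_bound:
  assumes x: "x \<in> Y" and y: "y \<in> Y" and xy: "x \<noteq> y"
  shows "(\<integral>\<^sup>+t. ennreal (norm (F x y t)) \<partial>N)
     \<le> ennreal (C1 * C2 * (A1 + A2 + 3 powr s2 * B) * 2 powr (s1 + s2 - v) * dist x y powr (v - (s1 + s2)))"
proof -
  define D where "D = dist x y"
  define h where "h = D / 2"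
  have D: "0 < D" using xy D_def by simp
  have h: "0 < h" using D h_def by simp
  define S where "S = s1 + s2"
  define T1 where "T1 t = (if dist x t < h then dist x t powr (-s1) else 0)" for t
  define T2 where "T2 t = (if dist y t < h then dist y t powr (-s2) else 0)" for t
  define T3 where "T3 t = (if h \<le> dist x t then dist x t powr (-S) else 0)" for t
  have T1m[measurable]: "T1 \<in> borel_measurable N" unfolding T1_def by measurable
  have T2m[measurable]: "T2 \<in> borel_measurable N" unfolding T2_def by measurable
  have T3m[measurable]: "T3 \<in> borel_measurable N" unfolding T3_def by measurable
  have T1p: "0 \<le> T1 t" "0 \<le> T2 t" "0 \<le> T3 t" for t unfolding T1_def T2_def T3_def by auto
  let ?a = "C1 * C2 * h powr (-s2)" and ?b = "C1 * C2 * h powr (-s1)" and ?e = "C1 * C2 * 3 powr s2"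
  have pw: "dist x t powr (-s1) * dist y t powr (-s2) \<le> h powr (-s2) * T1 t + h powr (-s1) * T2 t + 3 powr s2 * T3 t"
    if t: "t \<noteq> x" "t \<noteq> y" for t
  proof -
    have dx: "0 < dist x t" and dy: "0 < dist y t" using t by auto
    have tri: "D \<le> dist x t + dist y t" unfolding D_def by (metis dist_commute dist_triangle)
    have nn: "0 \<le> h powr (-s2) * T1 t" "0 \<le> h powr (-s1) * T2 t" "0 \<le> 3 powr s2 * T3 t"
      using T1p by auto
    consider "dist x t < h" | "\<not> dist x t < h" "dist y t < h" | "h \<le> dist x t" "h \<le> dist y t" by linarith
    then show ?thesis
    proof cases
      case 1
      have "h \<le> dist y t" using 1 tri h_def by simp
      hence "dist y t powr (-s2) \<le> h powr (-s2)" using rpow_le[OF h _ s2(1)] by simp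
      hence "dist x t powr (-s1) * dist y t powr (-s2) \<le> dist x t powr (-s1) * h powr (-s2)"
        by (intro mult_left_mono) auto
      also have "\<dots> = h powr (-s2) * T1 t" using 1 by (simp add: T1_def)
      finally show ?thesis using nn by linarith
    next
      case 2
      have "h \<le> dist x t" using 2 by simp
      hence "dist x t powr (-s1) \<le> h powr (-s1)" using rpow_le[OF h _ s1(1)] by simp
      hence "dist x t powr (-s1) * dist y t powr (-s2) \<le> h powr (-s1) * dist y t powr (-s2)"
        by (intro mult_right_mono) auto
      also have "\<dots> = h powr (-s1) * T2 t" using 2 by (simp add: T2_def)
      finally show ?thesis using nn by linarith
    next
      case 3
      have "dist x t \<le> D + dist y t" unfolding D_def by (rule dist_triangle)
      hence "dist x t \<le> 3 * dist y t" using 3 h_def by simp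
      hence "dist y t powr (-s2) \<le> (dist x t / 3) powr (-s2)"
        using dx by (intro rpow_le s2) auto
      also have "\<dots> = 3 powr s2 * dist x t powr (-s2)"
        using dx by (simp add: powr_divide powr_minus divide_simps)
      finally have "dist x t powr (-s1) * dist y t powr (-s2) \<le> dist x t powr (-s1) * (3 powr s2 * dist x t powr (-s2))"
        by (intro mult_left_mono) auto
      also have "\<dots> = 3 powr s2 * T3 t" using 3 dx
        by (simp add: T3_def S_def powr_add[symmetric])
      finally show ?thesis using nn by linarith
    qed
  qed
  have "(\<integral>\<^sup>+t. ennreal (norm (F x y t)) \<partial>N)
      \<le> (\<integral>\<^sup>+t. ennreal ?a * ennreal (T1 t) + ennreal ?b * ennreal (T2 t) + ennreal ?e * ennreal (T3 t) \<partial>N)"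
  proof (rule nn_integral_mono_AE)
    show "AE t in N. ennreal (norm (F x y t)) \<le> ennreal ?a * ennreal (T1 t) + ennreal ?b * ennreal (T2 t) + ennreal ?e * ennreal (T3 t)"
      using AE_ne[OF x] AE_ne[OF y] AE_space
    proof eventually_elim
      case (elim t)
      have "norm (F x y t) \<le> C1 * C2 * (dist x t powr (-s1) * dist y t powr (-s2))"
        using elim space_N x y by (intro F_bd) auto
      also have "\<dots> \<le> C1 * C2 * (h powr (-s2) * T1 t + h powr (-s1) * T2 t + 3 powr s2 * T3 t)"
        using pw elim C1 C2 by (intro mult_left_mono) auto
      also have "\<dots> = ?a * T1 t + ?b * T2 t + ?e * T3 t" by (simp add: algebra_simps)
      finally show ?case using T1p C1 C2
        by (simp add: ennreal_plus[symmetric] ennreal_mult[symmetric] ennreal_leI del: ennreal_plus)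
    qed
  qed
  also have "\<dots> = ennreal ?a * (\<integral>\<^sup>+t. T1 t \<partial>N) + ennreal ?b * (\<integral>\<^sup>+t. T2 t \<partial>N) + ennreal ?e * (\<integral>\<^sup>+t. T3 t \<partial>N)"
    by (simp add: nn_integral_add nn_integral_cmult)
  also have "\<dots> \<le> ennreal ?a * ennreal (A1 * h powr (v - s1)) + ennreal ?b * ennreal (A2 * h powr (v - s2))
       + ennreal ?e * ennreal (B * h powr (v - S))"
  proof -
    have I1: "(\<integral>\<^sup>+t. T1 t \<partial>N) \<le> ennreal (A1 * h powr (v - s1))" using A1[OF x h] unfolding T1_def .
    have I2: "(\<integral>\<^sup>+t. T2 t \<partial>N) \<le> ennreal (A2 * h powr (v - s2))" using A2[OF y h] unfolding T2_def .
    have I3: "(\<integral>\<^sup>+t. T3 t \<partial>N) \<le> ennreal (B * h powr (v - S))" using Bd[OF x h] unfolding T3_def S_def .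
    show ?thesis by (intro add_mono mult_left_mono I1 I2 I3) auto
  qed
  also have "\<dots> = ennreal (?a * (A1 * h powr (v - s1)) + ?b * (A2 * h powr (v - s2)) + ?e * (B * h powr (v - S)))"
    using C1 C2 A1pos A2pos Bpos
    by (simp add: ennreal_plus[symmetric] ennreal_mult[symmetric] del: ennreal_plus)
  also have "?a * (A1 * h powr (v - s1)) + ?b * (A2 * h powr (v - s2)) + ?e * (B * h powr (v - S))
      = C1 * C2 * (A1 + A2 + 3 powr s2 * B) * h powr (v - S)"
  proof -
    have q1: "-s2 + (v - s1) = v - S" and q2: "-s1 + (v - s2) = v - S" by (simp_all add: S_def)
    have "h powr (-s2) * h powr (v - s1) = h powr (v - S)" unfolding q1[symmetric] by (rule powr_add[symmetric])
    moreover have "h powr (-s1) * h powr (v - s2) = h powr (v - S)" unfolding q2[symmetric] by (rule powr_add[symmetric])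
    ultimately have "h powr (-s2) * h powr (v - s1) = h powr (v - S)" "h powr (-s1) * h powr (v - s2) = h powr (v - S)"
      by simp_all
    thus ?thesis by (simp add: algebra_simps)
  qed
  also have "h powr (v - S) = 2 powr (s1 + s2 - v) * dist x y powr (v - (s1 + s2))"
  proof -
    have i: "2 powr (S - v) = inverse (2 powr (v - S))" using powr_minus[of 2 "v - S"] by simp
    have "h powr (v - S) = D powr (v - S) / 2 powr (v - S)" unfolding h_def using D by (simp add: powr_divide)
    hence "h powr (v - S) = 2 powr (S - v) * D powr (v - S)" unfolding i by (simp add: field_simps)
    thus ?thesis by (simp add: S_def D_def)
  qed
  finally show ?thesis by (simp add: mult.assoc)
qed

end


context ker begin

lemma F_eq: "F x y = (\<lambda>t. K1 x t * K2 t y)" by (rule ext) (simp add: F_def)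

lemma F_integrable: "x \<in> Y \<Longrightarrow> y \<in> Y \<Longrightarrow> x \<noteq> y \<Longrightarrow> integrable N (F x y)"
  by (rule integrableI_bounded) (auto intro: le_less_trans[OF region_bound])

definition Kc where "Kc = C1 * C2 * (A1 + A2 + 3 powr s2 * B) * 2 powr (s1 + s2 - v)"

lemma F_norm_int:
  assumes "x \<in> Y" "y \<in> Y" "x \<noteq> y"
  shows "norm (LINT t|N. F x y t) \<le> Kc * dist x y powr (v - (s1 + s2))"
proof -
  have "ennreal (norm (LINT t|N. F x y t)) \<le> (\<integral>\<^sup>+t. ennreal (norm (F x y t)) \<partial>N)"
    using integral_norm_bound_ennreal[OF F_integrable[OF assms]] by simp
  also have "\<dots> \<le> ennreal (Kc * dist x y powr (v - (s1 + s2)))"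
    using region_bound[OF assms] by (simp add: Kc_def)
  finally show ?thesis
    using C1 C2 A1pos A2pos Bpos by (subst (asm) ennreal_le_iff) (auto simp: Kc_def)
qed

lemma near_x:
  assumes x: "x \<in> Y" and y: "y \<in> Y" and eta: "0 < \<eta>" and del: "0 < \<delta>" and xp: "dist x p < \<eta>"
    and far: "\<And>t. t \<in> Y \<Longrightarrow> dist p t < \<eta> \<Longrightarrow> \<delta> \<le> dist y t"
  shows "(\<integral>\<^sup>+t. ennreal (if dist p t < \<eta> then norm (F x y t) else 0) \<partial>N)
    \<le> ennreal (C1 * C2 * \<delta> powr (-s2) * (A1 * (2*\<eta>) powr (v - s1)))"
proof -
  have K0: "0 \<le> C1 * C2 * \<delta> powr (-s2)" using C1 C2 by simp
  have "(\<integral>\<^sup>+t. ennreal (if dist p t < \<eta> then norm (F x y t) else 0) \<partial>N)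
     \<le> (\<integral>\<^sup>+t. ennreal (C1 * C2 * \<delta> powr (-s2)) * ennreal (if dist x t < 2*\<eta> then dist x t powr (-s1) else 0) \<partial>N)"
  proof (rule nn_integral_mono_AE)
    show "AE t in N. ennreal (if dist p t < \<eta> then norm (F x y t) else 0)
       \<le> ennreal (C1 * C2 * \<delta> powr (-s2)) * ennreal (if dist x t < 2*\<eta> then dist x t powr (-s1) else 0)"
      using AE_ne[OF x] AE_space
    proof eventually_elim
      case (elim t)
      show ?case
      proof (cases "dist p t < \<eta>")
        case True
        have tY: "t \<in> Y" using elim space_N by auto
        have dyt: "\<delta> \<le> dist y t" using far[OF tY True] .
        hence ty: "t \<noteq> y" using del by auto
        have dxt: "dist x t < 2*\<eta>" using xp True dist_triangle[of x t p] by linarith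
        have "norm (F x y t) \<le> C1 * C2 * (dist x t powr (-s1) * dist y t powr (-s2))"
          using F_bd[OF x y tY] elim ty by auto
        also have "\<dots> \<le> C1 * C2 * (dist x t powr (-s1) * \<delta> powr (-s2))"
          using rpow_le[OF del dyt s2(1)] C1 C2 by (intro mult_left_mono) auto
        also have "\<dots> = (C1 * C2 * \<delta> powr (-s2)) * (if dist x t < 2*\<eta> then dist x t powr (-s1) else 0)"
          using dxt by simp
        finally have "norm (F x y t) \<le> (C1 * C2 * \<delta> powr (-s2)) * (if dist x t < 2*\<eta> then dist x t powr (-s1) else 0)" .
        hence "ennreal (norm (F x y t)) \<le> ennreal ((C1 * C2 * \<delta> powr (-s2)) * (if dist x t < 2*\<eta> then dist x t powr (-s1) else 0))"
          by (rule ennreal_leI)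
        thus ?thesis using True K0 by (simp add: ennreal_mult')
      qed simp
    qed
  qed
  also have "\<dots> = ennreal (C1 * C2 * \<delta> powr (-s2)) * (\<integral>\<^sup>+t. ennreal (if dist x t < 2*\<eta> then dist x t powr (-s1) else 0) \<partial>N)"
    by (rule nn_integral_cmult) measurable
  also have "\<dots> \<le> ennreal (C1 * C2 * \<delta> powr (-s2)) * ennreal (A1 * (2*\<eta>) powr (v - s1))"
    using A1[OF x, of "2*\<eta>"] eta by (intro mult_left_mono) auto
  also have "\<dots> = ennreal (C1 * C2 * \<delta> powr (-s2) * (A1 * (2*\<eta>) powr (v - s1)))"
    using K0 by (simp add: ennreal_mult')
  finally show ?thesis .
qed

lemma near_y:
  assumes x: "x \<in> Y" and y: "y \<in> Y" and eta: "0 < \<eta>" and del: "0 < \<delta>" and yp: "dist y p < \<eta>"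
    and far: "\<And>t. t \<in> Y \<Longrightarrow> dist p t < \<eta> \<Longrightarrow> \<delta> \<le> dist x t"
  shows "(\<integral>\<^sup>+t. ennreal (if dist p t < \<eta> then norm (F x y t) else 0) \<partial>N)
    \<le> ennreal (C1 * C2 * \<delta> powr (-s1) * (A2 * (2*\<eta>) powr (v - s2)))"
proof -
  have K0: "0 \<le> C1 * C2 * \<delta> powr (-s1)" using C1 C2 by simp
  have "(\<integral>\<^sup>+t. ennreal (if dist p t < \<eta> then norm (F x y t) else 0) \<partial>N)
     \<le> (\<integral>\<^sup>+t. ennreal (C1 * C2 * \<delta> powr (-s1)) * ennreal (if dist y t < 2*\<eta> then dist y t powr (-s2) else 0) \<partial>N)"
  proof (rule nn_integral_mono_AE)
    show "AE t in N. ennreal (if dist p t < \<eta> then norm (F x y t) else 0)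
       \<le> ennreal (C1 * C2 * \<delta> powr (-s1)) * ennreal (if dist y t < 2*\<eta> then dist y t powr (-s2) else 0)"
      using AE_ne[OF y] AE_space
    proof eventually_elim
      case (elim t)
      show ?case
      proof (cases "dist p t < \<eta>")
        case True
        have tY: "t \<in> Y" using elim space_N by auto
        have dxt: "\<delta> \<le> dist x t" using far[OF tY True] .
        hence tx: "t \<noteq> x" using del by auto
        have dyt: "dist y t < 2*\<eta>" using yp True dist_triangle[of y t p] by linarith
        have "norm (F x y t) \<le> C1 * C2 * (dist x t powr (-s1) * dist y t powr (-s2))"
          using F_bd[OF x y tY] elim tx by auto
        also have "\<dots> \<le> C1 * C2 * (\<delta> powr (-s1) * dist y t powr (-s2))"
          using rpow_le[OF del dxt s1(1)] C1 C2 by (intro mult_left_mono mult_right_mono) auto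
        also have "\<dots> = (C1 * C2 * \<delta> powr (-s1)) * (if dist y t < 2*\<eta> then dist y t powr (-s2) else 0)"
          using dyt by simp
        finally have "norm (F x y t) \<le> (C1 * C2 * \<delta> powr (-s1)) * (if dist y t < 2*\<eta> then dist y t powr (-s2) else 0)" .
        hence "ennreal (norm (F x y t)) \<le> ennreal ((C1 * C2 * \<delta> powr (-s1)) * (if dist y t < 2*\<eta> then dist y t powr (-s2) else 0))"
          by (rule ennreal_leI)
        thus ?thesis using True K0 by (simp add: ennreal_mult')
      qed simp
    qed
  qed
  also have "\<dots> = ennreal (C1 * C2 * \<delta> powr (-s1)) * (\<integral>\<^sup>+t. ennreal (if dist y t < 2*\<eta> then dist y t powr (-s2) else 0) \<partial>N)"
    by (rule nn_integral_cmult) measurable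
  also have "\<dots> \<le> ennreal (C1 * C2 * \<delta> powr (-s1)) * ennreal (A2 * (2*\<eta>) powr (v - s2))"
    using A2[OF y, of "2*\<eta>"] eta by (intro mult_left_mono) auto
  also have "\<dots> = ennreal (C1 * C2 * \<delta> powr (-s1) * (A2 * (2*\<eta>) powr (v - s2)))"
    using K0 by (simp add: ennreal_mult')
  finally show ?thesis .
qed

lemma K1_seq:
  assumes "\<And>n. xs n \<in> Y" "xs \<longlonglongrightarrow> x0" "x0 \<in> Y" "t \<in> Y" "\<And>n. xs n \<noteq> t" "x0 \<noteq> t"
  shows "(\<lambda>n. K1 (xs n) t) \<longlonglongrightarrow> K1 x0 t"
proof -
  have "((\<lambda>n. (\<lambda>(x, y). K1 x y) (xs n, t)) \<longlongrightarrow> (\<lambda>(x, y). K1 x y) (x0, t)) sequentially"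
    by (rule continuous_on_tendsto_compose[OF K1c]) (use assms in \<open>auto simp: offdiag_def intro!: tendsto_Pair\<close>)
  thus ?thesis by simp
qed

lemma K2_seq:
  assumes "\<And>n. ys n \<in> Y" "ys \<longlonglongrightarrow> y0" "y0 \<in> Y" "t \<in> Y" "\<And>n. ys n \<noteq> t" "y0 \<noteq> t"
  shows "(\<lambda>n. K2 t (ys n)) \<longlonglongrightarrow> K2 t y0"
proof -
  have "((\<lambda>n. (\<lambda>(x, y). K2 x y) (t, ys n)) \<longlongrightarrow> (\<lambda>(x, y). K2 x y) (t, y0)) sequentially"
  proof (rule continuous_on_tendsto_compose[OF K2c])
    have "\<And>n. t \<noteq> ys n" using assms(5) by metis
    thus "\<forall>\<^sub>F n in sequentially. (t, ys n) \<in> offdiag Y" using assms by (auto simp: offdiag_def)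
  qed (use assms in \<open>auto simp: offdiag_def intro!: tendsto_Pair\<close>)
  thus ?thesis by simp
qed

end


context ker begin

lemma F_cont: "continuous_on (offdiag Y) (\<lambda>(x, y). LINT t|N. F x y t)"
  unfolding continuous_on_sequentially
proof (intro allI ballI impI)
  fix p :: "nat \<Rightarrow> 'a \<times> 'a" and a
  assume a: "a \<in> offdiag Y" and pa: "(\<forall>n. p n \<in> offdiag Y) \<and> p \<longlonglongrightarrow> a"
  obtain x0 y0 where a0: "a = (x0, y0)" by (cases a)
  define xs where "xs n = fst (p n)" for n
  define ys where "ys n = snd (p n)" for n
  have pn: "p n = (xs n, ys n)" for n by (simp add: xs_def ys_def)
  have x0: "x0 \<in> Y" and y0: "y0 \<in> Y" and xy0: "x0 \<noteq> y0" using a a0 by (auto simp: offdiag_def)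
  have xsY: "xs n \<in> Y" and ysY: "ys n \<in> Y" and xys: "xs n \<noteq> ys n" for n
  proof -
    have "p n \<in> offdiag Y" using pa by blast
    thus "xs n \<in> Y" "ys n \<in> Y" "xs n \<noteq> ys n" using pn[of n] by (auto simp: offdiag_def)
  qed
  have xs_lim: "xs \<longlonglongrightarrow> x0" unfolding xs_def using tendsto_fst[of p a] pa a0 by simp
  have ys_lim: "ys \<longlonglongrightarrow> y0" unfolding ys_def using tendsto_snd[of p a] pa a0 by simp
  define G where "G x y = (LINT t|N. F x y t)" for x y
  define d0 where "d0 = dist x0 y0"
  have d0: "0 < d0" using xy0 d0_def by simp
  have "(\<lambda>n. G (xs n) (ys n)) \<longlonglongrightarrow> G x0 y0"
  proof (unfold tendsto_iff, intro allI impI)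
    fix e :: real assume e: "0 < e"
    define E where "E \<eta> = 2 * (C1 * C2 * (d0/2) powr (-s2) * (A1 * (2*\<eta>) powr (v - s1)))
        + 2 * (C1 * C2 * (d0/2) powr (-s1) * (A2 * (2*\<eta>) powr (v - s2)))" for \<eta>
    have l0: "((\<lambda>\<eta>::real. 2*\<eta>) \<longlongrightarrow> 0) (at_right 0)"
    proof -
      have "((\<lambda>\<eta>::real. 2*\<eta>) \<longlongrightarrow> 2*0) (at_right 0)" by (intro tendsto_mult tendsto_const tendsto_ident_at)
      thus ?thesis by simp
    qed
    have ev0: "eventually (\<lambda>\<eta>::real. 0 \<le> 2*\<eta>) (at_right 0)"
      by (rule eventually_mono[OF eventually_at_right_less]) simp
    have l1: "((\<lambda>\<eta>. (2*\<eta>) powr (v - s1)) \<longlongrightarrow> 0) (at_right 0)"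
      using s1 by (intro tendsto_zero_powrI[OF l0 tendsto_const ev0]) simp
    have l2: "((\<lambda>\<eta>. (2*\<eta>) powr (v - s2)) \<longlongrightarrow> 0) (at_right 0)"
      using s2 by (intro tendsto_zero_powrI[OF l0 tendsto_const ev0]) simp
    have "(E \<longlongrightarrow> 2 * (C1 * C2 * (d0/2) powr (-s2) * (A1 * 0)) + 2 * (C1 * C2 * (d0/2) powr (-s1) * (A2 * 0))) (at_right 0)"
      unfolding E_def by (intro tendsto_intros l1 l2)
    hence El: "(E \<longlongrightarrow> 0) (at_right 0)" by simp
    have ev1: "eventually (\<lambda>\<eta>. E \<eta> < e/2) (at_right 0)"
      using order_tendstoD(2)[OF El, of "e/2"] e by simp
    have ev2: "eventually (\<lambda>\<eta>. \<eta> \<in> {0<..<d0/4}) (at_right 0)"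
      using eventually_at_right_real[of 0 "d0/4"] d0 by simp
    have "eventually (\<lambda>\<eta>. E \<eta> < e/2 \<and> \<eta> \<in> {0<..<d0/4}) (at_right 0)"
      using ev1 ev2 by (rule eventually_conj)
    hence "\<exists>\<eta>. E \<eta> < e/2 \<and> \<eta> \<in> {0<..<d0/4}"
      using eventually_happens[of _ "at_right (0::real)"] by simp
    then obtain \<eta> where eta: "E \<eta> < e/2" "\<eta> < d0/4" "0 < \<eta>" by auto
    have h2: "0 < \<eta>/2" using eta by simp
    have "eventually (\<lambda>n. dist (xs n) x0 < \<eta>/2) sequentially"
      using xs_lim h2 by (rule tendstoD)
    moreover have "eventually (\<lambda>n. dist (ys n) y0 < \<eta>/2) sequentially"
      using ys_lim h2 by (rule tendstoD)
    ultimately have "eventually (\<lambda>n. dist (xs n) x0 < \<eta>/2 \<and> dist (ys n) y0 < \<eta>/2) sequentially"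
      by (rule eventually_conj)
    then obtain n0 where n0: "\<And>n. n0 \<le> n \<Longrightarrow> dist (xs n) x0 < \<eta>/2 \<and> dist (ys n) y0 < \<eta>/2"
      unfolding eventually_sequentially by blast
    define R where "R t \<longleftrightarrow> \<eta> \<le> dist x0 t \<and> \<eta> \<le> dist y0 t" for t
    define u where "u i t = (if R t then F (xs (i + n0)) (ys (i + n0)) t else 0)" for i t
    define u' where "u' t = (if R t then F x0 y0 t else 0)" for t
    define W where "W = C1 * C2 * ((\<eta>/2) powr (-s1) * (\<eta>/2) powr (-s2))"
    have Fm[measurable]: "F (xs i) (ys i) \<in> borel_measurable N" for i by (intro F_meas xsY ysY)
    have F0m[measurable]: "F x0 y0 \<in> borel_measurable N" by (intro F_meas x0 y0)
    have farx: "\<eta>/2 \<le> dist (xs (i + n0)) t" if "R t" for i t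
    proof -
      have "dist x0 t \<le> dist x0 (xs (i + n0)) + dist (xs (i + n0)) t" by (rule dist_triangle)
      thus ?thesis using n0[of "i + n0"] that R_def by (simp add: dist_commute)
    qed
    have fary: "\<eta>/2 \<le> dist (ys (i + n0)) t" if "R t" for i t
    proof -
      have "dist y0 t \<le> dist y0 (ys (i + n0)) + dist (ys (i + n0)) t" by (rule dist_triangle)
      thus ?thesis using n0[of "i + n0"] that R_def by (simp add: dist_commute)
    qed
    have lim: "(\<lambda>i. \<integral>\<^sup>+t. norm (u' t - u i t) \<partial>N) \<longlonglongrightarrow> 0"
    proof (rule nn_integral_dominated_convergence_norm[where w = "\<lambda>_. W"])
      show "u i \<in> borel_measurable N" for i unfolding u_def R_def by measurable
      show "u' \<in> borel_measurable N" unfolding u'_def R_def by measurable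
      show "(\<lambda>_. W) \<in> borel_measurable N" by simp
      show "AE t in N. norm (u j t) \<le> W" for j
      proof (rule AE_I2)
        fix t assume t: "t \<in> space N"
        show "norm (u j t) \<le> W"
        proof (cases "R t")
          case True
          have tY: "t \<in> Y" using t space_N by simp
          have h: "0 < \<eta>/2" using eta by simp
          have dx: "\<eta>/2 \<le> dist (xs (j + n0)) t" and dy: "\<eta>/2 \<le> dist (ys (j + n0)) t"
            using farx[OF True] fary[OF True] by auto
          have "xs (j + n0) \<noteq> t" "ys (j + n0) \<noteq> t" using dx dy h by auto
          hence "norm (u j t) \<le> C1 * C2 * (dist (xs (j + n0)) t powr (-s1) * dist (ys (j + n0)) t powr (-s2))"
            using True F_bd[OF xsY ysY tY] by (auto simp: u_def)
          also have "\<dots> \<le> W" unfolding W_def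
            using rpow_le[OF h dx s1(1)] rpow_le[OF h dy s2(1)] C1 C2
            by (intro mult_left_mono mult_mono) auto
          finally show ?thesis .
        next
          case False
          have "0 \<le> W" unfolding W_def using C1 C2 by simp
          thus ?thesis using False by (simp add: u_def)
        qed
      qed
      show "(\<integral>\<^sup>+t. ennreal W \<partial>N) < \<infinity>"
        using finite_N space_N by (simp add: ennreal_mult_less_top)
      show "AE t in N. (\<lambda>i. u i t) \<longlonglongrightarrow> u' t"
      proof (rule AE_I2)
        fix t assume t: "t \<in> space N"
        show "(\<lambda>i. u i t) \<longlonglongrightarrow> u' t"
        proof (cases "R t")
          case True
          have tY: "t \<in> Y" using t space_N by simp
          have h: "0 < \<eta>/2" using eta by simp
          have ne1: "xs (i + n0) \<noteq> t" "ys (i + n0) \<noteq> t" for i using farx[OF True, of i] fary[OF True, of i] h by auto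
          have ne0: "x0 \<noteq> t" "y0 \<noteq> t" using True eta by (auto simp: R_def)
          have "(\<lambda>i. K1 (xs (i + n0)) t) \<longlonglongrightarrow> K1 x0 t"
            by (rule K1_seq) (use xsY x0 tY ne1 ne0 LIMSEQ_ignore_initial_segment[OF xs_lim] in auto)
          moreover have "(\<lambda>i. K2 t (ys (i + n0))) \<longlonglongrightarrow> K2 t y0"
            by (rule K2_seq) (use ysY y0 tY ne1 ne0 LIMSEQ_ignore_initial_segment[OF ys_lim] in auto)
          ultimately have "(\<lambda>i. K1 (xs (i + n0)) t * K2 t (ys (i + n0))) \<longlonglongrightarrow> K1 x0 t * K2 t y0"
            by (rule tendsto_mult)
          thus ?thesis using True by (simp add: u_def u'_def F_def)
        next
          case False
          thus ?thesis by (simp add: u_def u'_def)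
        qed
      qed
    qed
    have "0 < ennreal (e/2)" using e by simp
    from order_tendstoD(2)[OF lim this]
    have "eventually (\<lambda>i. (\<integral>\<^sup>+t. norm (u' t - (if R t then F (xs (i + n0)) (ys (i + n0)) t else 0)) \<partial>N) < ennreal (e/2)) sequentially"
      by (simp add: u_def)
    hence evQ: "eventually (\<lambda>n. (\<integral>\<^sup>+t. norm (u' t - (if R t then F (xs n) (ys n) t else 0)) \<partial>N) < ennreal (e/2)) sequentially"
      by (rule eventually_sequentially_seg[THEN iffD1])
    show "eventually (\<lambda>n. dist (G (xs n) (ys n)) (G x0 y0) < e) sequentially"
      using evQ eventually_ge_at_top[of n0]
    proof eventually_elim
      case (elim n)
      note Q = elim(1)
      have cl: "dist (xs n) x0 < \<eta>/2" "dist (ys n) y0 < \<eta>/2" using n0 elim(2) by auto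
      let ?fn = "F (xs n) (ys n)" and ?f0 = "F x0 y0"
      have in1: "integrable N ?fn" by (intro F_integrable xsY ysY xys)
      have in0: "integrable N ?f0" by (intro F_integrable x0 y0 xy0)
      have "dist (G (xs n) (ys n)) (G x0 y0) = norm (LINT t|N. ?fn t - ?f0 t)"
        unfolding G_def dist_norm using in1 in0 by (simp add: Bochner_Integration.integral_diff)
      hence "ennreal (dist (G (xs n) (ys n)) (G x0 y0)) \<le> (\<integral>\<^sup>+t. norm (?fn t - ?f0 t) \<partial>N)"
        using integral_norm_bound_ennreal[OF Bochner_Integration.integrable_diff[OF in1 in0]] by simp
      also have "\<dots> \<le> (\<integral>\<^sup>+t. ennreal (if dist x0 t < \<eta> then norm (?fn t) else 0)
          + ennreal (if dist x0 t < \<eta> then norm (?f0 t) else 0)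
          + ennreal (if dist y0 t < \<eta> then norm (?fn t) else 0)
          + ennreal (if dist y0 t < \<eta> then norm (?f0 t) else 0)
          + ennreal (norm (u' t - (if R t then ?fn t else 0))) \<partial>N)"
      proof (rule nn_integral_mono)
        fix t
        have "norm (?fn t - ?f0 t) \<le> (if dist x0 t < \<eta> then norm (?fn t) else 0)
          + (if dist x0 t < \<eta> then norm (?f0 t) else 0)
          + (if dist y0 t < \<eta> then norm (?fn t) else 0)
          + (if dist y0 t < \<eta> then norm (?f0 t) else 0)
          + norm (u' t - (if R t then ?fn t else 0))"
        proof (cases "R t")
          case True
          thus ?thesis by (simp add: u'_def norm_minus_commute)
        next
          case False
          hence "dist x0 t < \<eta> \<or> dist y0 t < \<eta>" by (auto simp: R_def)
          moreover have "norm (?fn t - ?f0 t) \<le> norm (?fn t) + norm (?f0 t)" by (rule norm_triangle_ineq4)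
          moreover have "0 \<le> norm (?fn t)" "0 \<le> norm (?f0 t)" "0 \<le> norm (u' t - (if R t then ?fn t else 0))"
            by simp_all
          ultimately show ?thesis using False
            by (cases "dist x0 t < \<eta>"; cases "dist y0 t < \<eta>"; simp only: if_True if_False; linarith)
        qed
        thus "ennreal (norm (?fn t - ?f0 t)) \<le> ennreal (if dist x0 t < \<eta> then norm (?fn t) else 0)
          + ennreal (if dist x0 t < \<eta> then norm (?f0 t) else 0)
          + ennreal (if dist y0 t < \<eta> then norm (?fn t) else 0)
          + ennreal (if dist y0 t < \<eta> then norm (?f0 t) else 0)
          + ennreal (norm (u' t - (if R t then ?fn t else 0)))"
          by (simp add: ennreal_plus[symmetric] ennreal_leI del: ennreal_plus)
      qed
      also have "\<dots> = (\<integral>\<^sup>+t. ennreal (if dist x0 t < \<eta> then norm (?fn t) else 0) \<partial>N)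
          + (\<integral>\<^sup>+t. ennreal (if dist x0 t < \<eta> then norm (?f0 t) else 0) \<partial>N)
          + (\<integral>\<^sup>+t. ennreal (if dist y0 t < \<eta> then norm (?fn t) else 0) \<partial>N)
          + (\<integral>\<^sup>+t. ennreal (if dist y0 t < \<eta> then norm (?f0 t) else 0) \<partial>N)
          + (\<integral>\<^sup>+t. ennreal (norm (u' t - (if R t then ?fn t else 0))) \<partial>N)"
      proof -
        have Req: "R = (\<lambda>t. \<eta> \<le> dist x0 t \<and> \<eta> \<le> dist y0 t)" by (rule ext) (simp add: R_def)
        have Rm[measurable]: "Measurable.pred N R" unfolding Req by measurable
        have [measurable]: "u' \<in> borel_measurable N" unfolding u'_def by measurable
        let ?a = "\<lambda>t. ennreal (if dist x0 t < \<eta> then norm (?fn t) else 0)"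
        let ?b = "\<lambda>t. ennreal (if dist x0 t < \<eta> then norm (?f0 t) else 0)"
        let ?c = "\<lambda>t. ennreal (if dist y0 t < \<eta> then norm (?fn t) else 0)"
        let ?d = "\<lambda>t. ennreal (if dist y0 t < \<eta> then norm (?f0 t) else 0)"
        let ?e = "\<lambda>t. ennreal (norm (u' t - (if R t then ?fn t else 0)))"
        have am[measurable]: "?a \<in> borel_measurable N" by measurable
        have bm[measurable]: "?b \<in> borel_measurable N" by measurable
        have cm[measurable]: "?c \<in> borel_measurable N" by measurable
        have dm[measurable]: "?d \<in> borel_measurable N" by measurable
        have em[measurable]: "?e \<in> borel_measurable N" by measurable
        have s1: "(\<integral>\<^sup>+t. ?a t + ?b t + ?c t + ?d t + ?e t \<partial>N) = (\<integral>\<^sup>+t. ?a t + ?b t + ?c t + ?d t \<partial>N) + (\<integral>\<^sup>+t. ?e t \<partial>N)"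
          by (rule nn_integral_add[OF borel_measurable_add[OF borel_measurable_add[OF borel_measurable_add[OF am bm] cm] dm] em])
        have s2: "(\<integral>\<^sup>+t. ?a t + ?b t + ?c t + ?d t \<partial>N) = (\<integral>\<^sup>+t. ?a t + ?b t + ?c t \<partial>N) + (\<integral>\<^sup>+t. ?d t \<partial>N)"
          by (rule nn_integral_add[OF borel_measurable_add[OF borel_measurable_add[OF am bm] cm] dm])
        have s3: "(\<integral>\<^sup>+t. ?a t + ?b t + ?c t \<partial>N) = (\<integral>\<^sup>+t. ?a t + ?b t \<partial>N) + (\<integral>\<^sup>+t. ?c t \<partial>N)"
          by (rule nn_integral_add[OF borel_measurable_add[OF am bm] cm])
        have s4: "(\<integral>\<^sup>+t. ?a t + ?b t \<partial>N) = (\<integral>\<^sup>+t. ?a t \<partial>N) + (\<integral>\<^sup>+t. ?b t \<partial>N)"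
          by (rule nn_integral_add[OF am bm])
        show ?thesis unfolding s1 s2 s3 s4 ..
      qed
      also have "\<dots> < ennreal (C1 * C2 * (d0/2) powr (-s2) * (A1 * (2*\<eta>) powr (v - s1)))
          + ennreal (C1 * C2 * (d0/2) powr (-s2) * (A1 * (2*\<eta>) powr (v - s1)))
          + ennreal (C1 * C2 * (d0/2) powr (-s1) * (A2 * (2*\<eta>) powr (v - s2)))
          + ennreal (C1 * C2 * (d0/2) powr (-s1) * (A2 * (2*\<eta>) powr (v - s2)))
          + ennreal (e/2)"
      proof -
        have dd: "0 < d0/2" using d0 by simp
        have tr1: "d0 \<le> dist x0 t + dist t yy + dist yy y0" for t yy
          using dist_triangle[of x0 y0 t] dist_triangle[of t y0 yy] unfolding d0_def by linarith
        have tr2: "d0 \<le> dist x0 xx + dist xx t + dist t y0" for t xx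
          using dist_triangle[of x0 y0 t] dist_triangle[of x0 t xx] unfolding d0_def by linarith
        have b1: "(\<integral>\<^sup>+t. ennreal (if dist x0 t < \<eta> then norm (?fn t) else 0) \<partial>N)
           \<le> ennreal (C1 * C2 * (d0/2) powr (-s2) * (A1 * (2*\<eta>) powr (v - s1)))"
        proof (rule near_x[OF xsY ysY eta(3) dd])
          show "dist (xs n) x0 < \<eta>" using cl eta by simp
          fix t assume "t \<in> Y" "dist x0 t < \<eta>"
          thus "d0/2 \<le> dist (ys n) t" using tr1[of t "ys n"] cl eta by (simp add: dist_commute)
        qed
        have b2: "(\<integral>\<^sup>+t. ennreal (if dist x0 t < \<eta> then norm (?f0 t) else 0) \<partial>N)
           \<le> ennreal (C1 * C2 * (d0/2) powr (-s2) * (A1 * (2*\<eta>) powr (v - s1)))"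
        proof (rule near_x[OF x0 y0 eta(3) dd])
          show "dist x0 x0 < \<eta>" using eta by simp
          fix t assume "t \<in> Y" "dist x0 t < \<eta>"
          thus "d0/2 \<le> dist y0 t" using tr1[of t y0] eta by (simp add: dist_commute)
        qed
        have b3: "(\<integral>\<^sup>+t. ennreal (if dist y0 t < \<eta> then norm (?fn t) else 0) \<partial>N)
           \<le> ennreal (C1 * C2 * (d0/2) powr (-s1) * (A2 * (2*\<eta>) powr (v - s2)))"
        proof (rule near_y[OF xsY ysY eta(3) dd])
          show "dist (ys n) y0 < \<eta>" using cl eta by simp
          fix t assume "t \<in> Y" "dist y0 t < \<eta>"
          thus "d0/2 \<le> dist (xs n) t" using tr2[of "xs n" t] cl eta by (simp add: dist_commute)
        qed
        have b4: "(\<integral>\<^sup>+t. ennreal (if dist y0 t < \<eta> then norm (?f0 t) else 0) \<partial>N)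
           \<le> ennreal (C1 * C2 * (d0/2) powr (-s1) * (A2 * (2*\<eta>) powr (v - s2)))"
        proof (rule near_y[OF x0 y0 eta(3) dd])
          show "dist y0 y0 < \<eta>" using eta by simp
          fix t assume "t \<in> Y" "dist y0 t < \<eta>"
          thus "d0/2 \<le> dist x0 t" using tr2[of x0 t] eta by (simp add: dist_commute)
        qed
        have fin: "ennreal (C1 * C2 * (d0/2) powr (-s2) * (A1 * (2*\<eta>) powr (v - s1)))
          + ennreal (C1 * C2 * (d0/2) powr (-s2) * (A1 * (2*\<eta>) powr (v - s1)))
          + ennreal (C1 * C2 * (d0/2) powr (-s1) * (A2 * (2*\<eta>) powr (v - s2)))
          + ennreal (C1 * C2 * (d0/2) powr (-s1) * (A2 * (2*\<eta>) powr (v - s2))) \<noteq> \<infinity>" by simp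
        note le4 = add_mono[OF add_mono[OF add_mono[OF b1 b2] b3] b4]
        have lt: "ennreal (C1 * C2 * (d0/2) powr (-s2) * (A1 * (2*\<eta>) powr (v - s1)))
          + ennreal (C1 * C2 * (d0/2) powr (-s2) * (A1 * (2*\<eta>) powr (v - s1)))
          + ennreal (C1 * C2 * (d0/2) powr (-s1) * (A2 * (2*\<eta>) powr (v - s2)))
          + ennreal (C1 * C2 * (d0/2) powr (-s1) * (A2 * (2*\<eta>) powr (v - s2)))
          + (\<integral>\<^sup>+t. ennreal (norm (u' t - (if R t then ?fn t else 0))) \<partial>N)
          < ennreal (C1 * C2 * (d0/2) powr (-s2) * (A1 * (2*\<eta>) powr (v - s1)))
          + ennreal (C1 * C2 * (d0/2) powr (-s2) * (A1 * (2*\<eta>) powr (v - s1)))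
          + ennreal (C1 * C2 * (d0/2) powr (-s1) * (A2 * (2*\<eta>) powr (v - s2)))
          + ennreal (C1 * C2 * (d0/2) powr (-s1) * (A2 * (2*\<eta>) powr (v - s2)))
          + ennreal (e/2)"
          unfolding ennreal_add_left_cancel_less using fin Q by (intro conjI)
        show ?thesis by (rule le_less_trans[OF add_right_mono[OF le4] lt])
      qed
      also have "\<dots> = ennreal (E \<eta> + e/2)"
        using C1 C2 A1pos A2pos e
        by (simp add: E_def ennreal_plus[symmetric] del: ennreal_plus)
      finally have "ennreal (dist (G (xs n) (ys n)) (G x0 y0)) < ennreal (E \<eta> + e/2)" .
      hence "dist (G (xs n) (ys n)) (G x0 y0) < E \<eta> + e/2" by (simp add: ennreal_less_iff)
      thus ?case using eta by simp
    qed
  qed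
  thus "(((\<lambda>(x, y). LINT t|N. F x y t) \<circ> p) \<longlongrightarrow> (\<lambda>(x, y). LINT t|N. F x y t) a) sequentially"
    by (simp add: o_def pn a0 G_def)
qed

end


theorem corollary4p3:
  fixes Y :: "'a::metric_space set"
    and N :: "'a measure"
    and v t1 t2 :: real
    and K1 K2 :: "'a \<Rightarrow> 'a \<Rightarrow> complex"
  assumes space_N: "space N = Y"
    and borel_sets: "sets (restrict_space borel Y) \<subseteq> sets N"
    and finite_N: "emeasure N Y < \<infinity>"
    and v_pos: "0 < v"
    and ahlfors: "upper_ahlfors_regular N Y v"
    and t1: "0 < t1" "t1 \<le> v"
    and t2: "0 < t2" "t2 \<le> v"
    and K1: "kernel_class (v - t1) Y K1"
    and K2: "kernel_class (v - t2) Y K2"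
    and sum_lt: "t1 + t2 < v"
  shows "(\<forall>x\<in>Y. \<forall>y\<in>Y. x \<noteq> y \<longrightarrow> integrable N (\<lambda>t. K1 x t * K2 t y))
       \<and> continuous_on (offdiag Y) (\<lambda>(x, y). LINT t|N. K1 x t * K2 t y)
       \<and> (\<exists>C::real. \<forall>(x, y)\<in>offdiag Y.
             norm (LINT t|N. K1 x t * K2 t y) * dist x y powr (v - (t1 + t2)) \<le> C)"
proof -
  obtain r0 :: ereal and c0 :: real where r0: "r0 > 0" and c0: "c0 > 0"
    and hb: "\<And>x r. x \<in> Y \<Longrightarrow> 0 < r \<Longrightarrow> ereal r < r0 \<Longrightarrow> emeasure N (ball x r \<inter> Y) \<le> ennreal (c0 * r powr v)"
    using ahlfors unfolding upper_ahlfors_regular_def by blast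
  obtain R where R0: "0 < ereal R" and Rr: "ereal R < r0" using ereal_dense2[OF r0] by blast
  have R: "0 < R" using R0 by simp
  define M where "M = measure N Y"
  have M: "0 \<le> M" unfolding M_def by simp
  have eM: "emeasure N Y = ennreal M" unfolding M_def using finite_N by (intro emeasure_eq_ennreal_measure) simp
  define c where "c = c0 + M / R powr v"
  have c: "0 < c" unfolding c_def using c0 M R by (simp add: add_pos_nonneg)
  have YN: "Y \<in> sets N" using space_N sets.top[of N] by simp
  have ball: "emeasure N (ball x r \<inter> Y) \<le> ennreal (c * r powr v)" if x: "x \<in> Y" and r: "0 < r" for x r
  proof (cases "r < R")
    case True
    hence "ereal r < r0" using Rr by (metis ereal_less_eq(3) less_imp_le order_le_less_trans)
    hence "emeasure N (ball x r \<inter> Y) \<le> ennreal (c0 * r powr v)" using hb x r by blast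
    also have "\<dots> \<le> ennreal (c * r powr v)"
      using M R by (intro ennreal_leI mult_right_mono) (auto simp: c_def)
    finally show ?thesis .
  next
    case False
    have "emeasure N (ball x r \<inter> Y) \<le> emeasure N Y" using YN by (intro emeasure_mono) auto
    also have "\<dots> = ennreal M" by (rule eM)
    also have "\<dots> \<le> ennreal (c * r powr v)"
    proof (rule ennreal_leI)
      have Rv: "0 < R powr v" using R by simp
      have "R powr v \<le> r powr v" using False R v_pos by (intro powr_mono2) auto
      hence "M \<le> M / R powr v * r powr v" using M Rv by (simp add: field_simps mult_left_mono)
      also have "\<dots> \<le> c * r powr v" using c0 by (intro mult_right_mono) (auto simp: c_def)
      finally show "M \<le> c * r powr v" .
    qed
    finally show ?thesis .
  qed
  interpret ahl N Y v c
    by unfold_locales (use space_N borel_sets finite_N v_pos c ball in auto)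
  define s1 where "s1 = v - t1"
  define s2 where "s2 = v - t2"
  have s1: "0 \<le> s1" "s1 < v" and s2: "0 \<le> s2" "s2 < v" and S: "v < s1 + s2"
    using t1 t2 sum_lt by (auto simp: s1_def s2_def)
  obtain A1 where A1: "A1 \<ge> 0" "\<And>z \<rho>. z \<in> Y \<Longrightarrow> 0 < \<rho> \<Longrightarrow> (\<integral>\<^sup>+t. ennreal (if dist z t < \<rho> then dist z t powr (-s1) else 0) \<partial>N)
     \<le> ennreal (A1 * \<rho> powr (v - s1))" using inner[OF s1] by blast
  obtain A2 where A2: "A2 \<ge> 0" "\<And>z \<rho>. z \<in> Y \<Longrightarrow> 0 < \<rho> \<Longrightarrow> (\<integral>\<^sup>+t. ennreal (if dist z t < \<rho> then dist z t powr (-s2) else 0) \<partial>N)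
     \<le> ennreal (A2 * \<rho> powr (v - s2))" using inner[OF s2] by blast
  obtain B where B: "B \<ge> 0" "\<And>z r. z \<in> Y \<Longrightarrow> 0 < r \<Longrightarrow> (\<integral>\<^sup>+t. ennreal (if r \<le> dist z t then dist z t powr (-(s1+s2)) else 0) \<partial>N)
     \<le> ennreal (B * r powr (v - (s1+s2)))" using outer[OF S] by blast
  obtain D1 where D1: "\<forall>(x, y)\<in>offdiag Y. norm (K1 x y) * dist x y powr s1 \<le> D1"
    using K1 unfolding kernel_class_def s1_def by blast
  obtain D2 where D2: "\<forall>(x, y)\<in>offdiag Y. norm (K2 x y) * dist x y powr s2 \<le> D2"
    using K2 unfolding kernel_class_def s2_def by blast
  define C1 where "C1 = max D1 0"
  define C2 where "C2 = max D2 0"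
  have K1bd: "norm (K1 x t) \<le> C1 * dist x t powr (-s1)" if "x \<in> Y" "t \<in> Y" "x \<noteq> t" for x t
  proof -
    have d: "0 < dist x t powr s1" using that by simp
    have "norm (K1 x t) * dist x t powr s1 \<le> C1" using D1 that unfolding C1_def offdiag_def by fastforce
    hence "norm (K1 x t) \<le> C1 / dist x t powr s1" using d by (simp add: pos_le_divide_eq)
    thus ?thesis by (simp add: powr_minus divide_inverse)
  qed
  have K2bd: "norm (K2 t y) \<le> C2 * dist y t powr (-s2)" if "t \<in> Y" "y \<in> Y" "t \<noteq> y" for t y
  proof -
    have d: "0 < dist t y powr s2" using that by simp
    have "norm (K2 t y) * dist t y powr s2 \<le> C2" using D2 that unfolding C2_def offdiag_def by fastforce
    hence "norm (K2 t y) \<le> C2 / dist t y powr s2" using d by (simp add: pos_le_divide_eq)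
    thus ?thesis by (simp add: powr_minus divide_inverse dist_commute)
  qed
  have K1c: "continuous_on (offdiag Y) (\<lambda>(x, y). K1 x y)" using K1 unfolding kernel_class_def by blast
  have K2c: "continuous_on (offdiag Y) (\<lambda>(x, y). K2 x y)" using K2 unfolding kernel_class_def by blast
  interpret ker N Y v c K1 K2 s1 s2 C1 C2 A1 A2 B
    by unfold_locales (use s1 s2 S K1bd K2bd K1c K2c A1 A2 B in \<open>auto simp: C1_def C2_def\<close>)
  have part1: "\<forall>x\<in>Y. \<forall>y\<in>Y. x \<noteq> y \<longrightarrow> integrable N (\<lambda>t. K1 x t * K2 t y)"
    using F_integrable by (simp add: F_eq)
  have part2: "continuous_on (offdiag Y) (\<lambda>(x, y). LINT t|N. K1 x t * K2 t y)"
    using F_cont by (simp add: F_def)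
  have part3: "\<forall>(x, y)\<in>offdiag Y. norm (LINT t|N. K1 x t * K2 t y) * dist x y powr (v - (t1 + t2)) \<le> Kc"
  proof (clarsimp simp: offdiag_def)
    fix x y assume xy: "x \<in> Y" "y \<in> Y" "x \<noteq> y"
    have d: "0 < dist x y" using xy by simp
    have e: "v - (s1 + s2) = - (v - (t1 + t2))" by (simp add: s1_def s2_def)
    have "norm (LINT t|N. K1 x t * K2 t y) \<le> Kc * dist x y powr (v - (s1 + s2))"
      using F_norm_int[OF xy] by (simp add: F_def)
    hence "norm (LINT t|N. K1 x t * K2 t y) * dist x y powr (v - (t1 + t2))
        \<le> Kc * dist x y powr (v - (s1 + s2)) * dist x y powr (v - (t1 + t2))"
      by (intro mult_right_mono) auto
    also have "\<dots> = Kc"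
    proof -
      have "dist x y powr (-(v - (t1+t2))) * dist x y powr (v - (t1+t2)) = dist x y powr (-(v - (t1+t2)) + (v - (t1+t2)))"
        by (rule powr_add[symmetric])
      also have "\<dots> = 1" using d by simp
      finally have "dist x y powr (-(v - (t1+t2))) * dist x y powr (v - (t1+t2)) = 1" .
      thus ?thesis unfolding e by (simp add: mult.assoc)
    qed
    finally show "norm (LINT t|N. K1 x t * K2 t y) * dist x y powr (v - (t1 + t2)) \<le> Kc" .
  qed
  show ?thesis using part1 part2 part3 by blast
qed

end
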